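(* Let $n$ be an even positive integer. Then every welded link (with any number of components) is $V(n)$-equivalent to the unknot.
   Context: A virtual link diagram is the image of an immersion of finitely many ordered, oriented circles in the plane whose double points are transverse and each is either a classical crossing (with over/under information) or a virtual crossing (no over/under information). Welded Reidemeister moves are: the classical Reidemeister moves R1–R3; the virtual moves VR1–VR3 (the Reidemeister moves with all crossings virtual) and VR4 (a strand containing only virtual crossings slides past a classical crossing); and the OC move (if a strand passes over two other strands at two classical crossings, and those two strands cross each other at a virtual crossing, the first strand may be slid across that virtual crossing). A welded link is an equivalence class of virtual link diagrams under welded Reidemeister moves; the unknot is the class of a single circle without crossings. The $V(n)$-move is the following local move on a virtual link diagram. Inside a disk the diagram consists of two arcs oriented in the same direction (say both running upward). On one side of the move the two arcs twist around each other through $n$ consecutive classical crossings forming a two-strand twist (the $2$-braid $\sigma^{n}$, all $n$ crossings of the same sign); on the other side the two arcs, with the same four endpoints on the boundary of the disk, cross each other exactly once at a single virtual crossing. The move replaces one side by the other. (For $n$ even the connectivity of the endpoints changes, so the move may change the number of components.) Two welded links are $V(n)$-equivalent if diagrams of them are related by a finite sequence of $V(n)$-moves and welded Reidemeister moves. *)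

theory Defs
  imports Main "HOL-Library.Multiset"
begin

(* Welded links are modelled by Gauss diagrams.
   A diagram is a list of components (ordered, oriented circles); each
   component is a cyclic word of crossing ends.  A crossing end is
   (crossing label, over/under end, sign of the crossing; True = positive). *)

datatype ekind = OverE | UnderE

fun opp :: "ekind \<Rightarrow> ekind" where
  "opp OverE = UnderE" | "opp UnderE = OverE"

type_synonym letter = "nat \<times> ekind \<times> bool"
type_synonym gauss = "letter list list"

definition gwf :: "gauss \<Rightarrow> bool" where
  "gwf D \<longleftrightarrow> distinct (map (\<lambda>(c,k,s). (c,k)) (concat D)) \<and>
     (\<forall>(c,k,s) \<in> set (concat D). (c, opp k, s) \<in> set (concat D))"

definition gids :: "gauss \<Rightarrow> nat set" where
  "gids D = fst ` set (concat D)"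

definition adj :: "gauss \<Rightarrow> letter \<Rightarrow> letter \<Rightarrow> bool" where
  "adj D a b \<longleftrightarrow> (\<exists>i<length D. \<exists>j<length (D!i).
      D!i!j = a \<and> D!i!(Suc j mod length (D!i)) = b)"

definition ordpair :: "gauss \<Rightarrow> bool \<Rightarrow> letter \<Rightarrow> letter \<Rightarrow> bool" where
  "ordpair D b0 a b \<longleftrightarrow> (if b0 then adj D a b else adj D b a)"

definition swp :: "letter \<Rightarrow> letter \<Rightarrow> letter \<Rightarrow> letter" where
  "swp a b l = (if l = a then b else if l = b then a else l)"

definition del_ids :: "nat set \<Rightarrow> gauss \<Rightarrow> gauss" where
  "del_ids C D = map (filter (\<lambda>l. fst l \<notin> C)) D"

definition r1_del :: "gauss \<Rightarrow> gauss \<Rightarrow> bool" where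
  "r1_del D D' \<longleftrightarrow> (\<exists>c s. (adj D (c,OverE,s) (c,UnderE,s) \<or> adj D (c,UnderE,s) (c,OverE,s))
       \<and> D' = del_ids {c} D)"

(* R2: delete two crossings of opposite signs where one strand passes over
   another twice *)
definition r2_del :: "gauss \<Rightarrow> gauss \<Rightarrow> bool" where
  "r2_del D D' \<longleftrightarrow> (\<exists>c d sc sd. c \<noteq> d \<and> sc \<noteq> sd \<and>
       adj D (c,OverE,sc) (d,OverE,sd) \<and>
       (adj D (c,UnderE,sc) (d,UnderE,sd) \<or> adj D (d,UnderE,sd) (c,UnderE,sc)) \<and>
       D' = del_ids {c,d} D)"

(* R3: top strand T over middle M (crossing x) and bottom B (crossing y),
   M over B (crossing z).  On each of the three strands the two ends are
   adjacent; the move reverses each of these three pairs.  The sign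
   condition singles out exactly the configurations realised by three
   oriented lines in the plane. *)
definition r3 :: "gauss \<Rightarrow> gauss \<Rightarrow> bool" where
  "r3 D D' \<longleftrightarrow> (\<exists>x y z sx sy sz oT oM oB. distinct [x,y,z] \<and>
       ordpair D oT (x,OverE,sx) (y,OverE,sy) \<and>
       ordpair D oM (x,UnderE,sx) (z,OverE,sz) \<and>
       ordpair D oB (y,UnderE,sy) (z,UnderE,sz) \<and>
       ((sx = sy) = (oM = oB)) \<and> ((sy = sz) = (oT = oM)) \<and>
       D' = map (map (swp (x,OverE,sx) (y,OverE,sy) \<circ> swp (x,UnderE,sx) (z,OverE,sz)
                       \<circ> swp (y,UnderE,sy) (z,UnderE,sz))) D)"

definition oc :: "gauss \<Rightarrow> gauss \<Rightarrow> bool" where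
  "oc D D' \<longleftrightarrow> (\<exists>c d sc sd. c \<noteq> d \<and> adj D (c,OverE,sc) (d,OverE,sd) \<and>
       D' = map (map (swp (c,OverE,sc) (d,OverE,sd))) D)"

definition giso :: "gauss \<Rightarrow> gauss \<Rightarrow> bool" where
  "giso D D' \<longleftrightarrow>
     (\<exists>i m. i < length D \<and> D' = D[i := rotate m (D!i)]) \<or>
     mset D' = mset D \<or>
     (\<exists>g. inj_on g (gids D) \<and> D' = map (map (\<lambda>(c,k,s). (g c, k, s))) D)"

(* V(n)-move, from the virtual-crossing side (points X, Y) to the twist side.
   X is placed at the junction end->start of the first component, Y at the
   junction end->start of the second component, or inside the first one
   between u and v. W1 is the word read along the strand entering at X,
   W2 along the strand entering at Y. *)
definition vn_ins :: "nat \<Rightarrow> gauss \<Rightarrow> gauss \<Rightarrow> bool" where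
  "vn_ins n D D' \<longleftrightarrow> (\<exists>ids s k0. length ids = n \<and> distinct ids \<and> set ids \<inter> gids D = {} \<and>
     (let W1 = map (\<lambda>i. (ids!i, if even i then k0 else opp k0, s)) [0..<n];
          W2 = map (\<lambda>i. (ids!i, if even i then opp k0 else k0, s)) [0..<n]
      in (\<exists>a b rest. D = a # b # rest \<and>
             D' = (if even n then (a @ W1 @ b @ W2) # rest
                   else (a @ W1) # (b @ W2) # rest)) \<or>
         (\<exists>u v rest. D = (u @ v) # rest \<and>
             D' = (if even n then (u @ W2) # (v @ W1) # rest
                   else (u @ W2 @ v @ W1) # rest))))"

definition welded_step :: "gauss \<Rightarrow> gauss \<Rightarrow> bool" where
  "welded_step D D' \<longleftrightarrow> gwf D \<and> gwf D' \<and>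
     (r1_del D D' \<or> r2_del D D' \<or> r3 D D' \<or> oc D D' \<or> giso D D')"

definition vn_step :: "nat \<Rightarrow> gauss \<Rightarrow> gauss \<Rightarrow> bool" where
  "vn_step n D D' \<longleftrightarrow> welded_step D D' \<or> (gwf D \<and> gwf D' \<and> vn_ins n D D')"

definition vn_equiv :: "nat \<Rightarrow> gauss \<Rightarrow> gauss \<Rightarrow> bool" where
  "vn_equiv n = (\<lambda>D D'. vn_step n D D' \<or> vn_step n D' D)\<^sup>*\<^sup>*"

definition unknot :: gauss where
  "unknot = [[]]"

end

theory Submission
  imports Defs
begin


lemma E_refl: "vn_equiv n D D" by (simp add: vn_equiv_def)

lemma E_trans: "vn_equiv n A B \<Longrightarrow> vn_equiv n B C \<Longrightarrow> vn_equiv n A C"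
  unfolding vn_equiv_def by (rule rtranclp_trans)

lemma E_sym: "vn_equiv n A B \<Longrightarrow> vn_equiv n B A"
  unfolding vn_equiv_def
proof (induction rule: rtranclp_induct)
  case base then show ?case by simp
next
  case (step y z)
  then have "(\<lambda>D D'. vn_step n D D' \<or> vn_step n D' D) z y" by blast
  then show ?case using step(3) by (rule converse_rtranclp_into_rtranclp)
qed

lemma E_step: "vn_step n A B \<Longrightarrow> vn_equiv n A B"
  unfolding vn_equiv_def by (rule r_into_rtranclp) simp

lemma E_wstep: "welded_step A B \<Longrightarrow> vn_equiv n A B"
  by (rule E_step) (simp add: vn_step_def)

definition key :: "letter \<Rightarrow> nat \<times> ekind" where "key l = (fst l, fst (snd l))"

definition gw :: "letter list \<Rightarrow> bool" where
  "gw xs \<longleftrightarrow> distinct (map key xs) \<and> (\<forall>c k s. (c,k,s) \<in> set xs \<longrightarrow> (c, opp k, s) \<in> set xs)"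

lemma gwf_gw: "gwf D = gw (concat D)"
proof -
  have "(\<lambda>(c,k,s). (c,k)) = key" by (auto simp: key_def)
  then show ?thesis unfolding gwf_def gw_def by (simp only: \<open>_ = key\<close>) blast
qed

lemma gw_mset: "mset xs = mset ys \<Longrightarrow> gw xs \<Longrightarrow> gw ys"
proof -
  assume m: "mset xs = mset ys" and g: "gw xs"
  have s: "set xs = set ys" using m by (metis set_mset_mset)
  have "mset (map key xs) = mset (map key ys)" using m by simp
  then have "distinct (map key xs) = distinct (map key ys)"
    by (rule mset_eq_imp_distinct_iff)
  then show ?thesis using g s unfolding gw_def by simp
qed

lemma gw_distinct: "gw xs \<Longrightarrow> distinct xs"
  unfolding gw_def using distinct_map by blast

lemma gw_key_eq: "gw xs \<Longrightarrow> a \<in> set xs \<Longrightarrow> b \<in> set xs \<Longrightarrow> key a = key b \<Longrightarrow> a = b"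
  unfolding gw_def by (meson distinct_map inj_onD)

lemma gw_sign: "gw xs \<Longrightarrow> (c,k,s) \<in> set xs \<Longrightarrow> (c,k,t) \<in> set xs \<Longrightarrow> s = t"
  using gw_key_eq[of xs "(c,k,s)" "(c,k,t)"] by (simp add: key_def)

lemma opp_neq[simp]: "opp k \<noteq> k" by (cases k) auto
lemma opp_opp[simp]: "opp (opp k) = k" by (cases k) auto
lemma opp_neq2[simp]: "k \<noteq> opp k" by (cases k) auto
lemma opp_inj[simp]: "(opp a = opp b) = (a = b)" by (cases a; cases b) auto

lemma gw_fst: "gw xs \<Longrightarrow> (c,k,s) \<in> set xs \<Longrightarrow> (c,k',t) \<in> set xs \<Longrightarrow> (k' = k \<and> t = s) \<or> (k' = opp k \<and> t = s)"
proof -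
  assume g: "gw xs" and a: "(c,k,s) \<in> set xs" and b: "(c,k',t) \<in> set xs"
  have o: "(c, opp k, s) \<in> set xs" using g a unfolding gw_def by blast
  show ?thesis
  proof (cases "k' = k")
    case True then show ?thesis using gw_sign[OF g a] b by auto
  next
    case False then have "k' = opp k" by (cases k; cases k') auto
    then show ?thesis using gw_sign[OF g o] b by auto
  qed
qed

lemma gw_append: "gw xs \<Longrightarrow> gw ys \<Longrightarrow> fst ` set xs \<inter> fst ` set ys = {} \<Longrightarrow> gw (xs @ ys)"
  unfolding gw_def
  by (auto simp: distinct_append key_def)

lemma gw_filter: "gw xs \<Longrightarrow> gw (filter (\<lambda>l. fst l \<notin> C) xs)"
  unfolding gw_def by (auto simp: distinct_map_filter)



definition blk :: "nat \<Rightarrow> nat \<Rightarrow> ekind \<Rightarrow> bool \<Rightarrow> letter list" where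
  "blk N n k s = map (\<lambda>i. (N+i, if even i then k else opp k, s)) [0..<n]"

lemma blk_mem: "l \<in> set (blk N n k s) \<longleftrightarrow> (\<exists>i<n. l = (N+i, if even i then k else opp k, s))"
  unfolding blk_def by auto

lemma blk_fst: "fst ` set (blk N n k s) = {N..<N+n}"
proof
  show "fst ` set (blk N n k s) \<subseteq> {N..<N+n}" unfolding blk_def by auto
  show "{N..<N+n} \<subseteq> fst ` set (blk N n k s)"
  proof
    fix x assume x: "x \<in> {N..<N+n}"
    then have "(N + (x-N), if even (x-N) then k else opp k, s) \<in> set (blk N n k s)"
      unfolding blk_mem by (intro exI[of _ "x-N"]) auto
    then show "x \<in> fst ` set (blk N n k s)" using x by (metis atLeastLessThan_iff fst_conv image_eqI le_add_diff_inverse)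
  qed
qed

lemma blk_partner: "(c,k',t) \<in> set (blk N n k s) \<Longrightarrow> (c, opp k', t) \<in> set (blk N n (opp k) s)"
proof -
  assume "(c,k',t) \<in> set (blk N n k s)"
  then obtain i where i: "i < n" "(c,k',t) = (N+i, if even i then k else opp k, s)"
    unfolding blk_mem by blast
  then show ?thesis unfolding blk_mem by (intro exI[of _ i]) auto
qed

lemma blk_key: "map key (blk N n k s) = map (\<lambda>i. (N+i, if even i then k else opp k)) [0..<n]"
  unfolding blk_def key_def by simp

lemma gw_blk: "gw (blk N n k s @ blk N n (opp k) s)"
proof -
  have d1: "distinct (map key (blk N n k' s))" for k'
    unfolding blk_key by (simp add: distinct_map inj_on_def)
  have "set (map key (blk N n k s)) \<inter> set (map key (blk N n (opp k) s)) = {}"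
  proof (rule ccontr)
    assume "\<not> ?thesis"
    then obtain x where x: "x \<in> set (map key (blk N n k s))" "x \<in> set (map key (blk N n (opp k) s))"
      by blast
    obtain i where i: "i < n" "x = (N+i, if even i then k else opp k)" using x(1) unfolding blk_key by auto
    obtain j where j: "j < n" "x = (N+j, if even j then opp k else opp (opp k))" using x(2) unfolding blk_key by auto
    have "i = j" using i j by simp
    then show False using i j by (simp split: if_splits)
  qed
  then have "distinct (map key (blk N n k s @ blk N n (opp k) s))"
    using d1 by (simp add: distinct_append)
  moreover have "\<forall>c k' t. (c,k',t) \<in> set (blk N n k s @ blk N n (opp k) s) \<longrightarrow>
        (c, opp k', t) \<in> set (blk N n k s @ blk N n (opp k) s)"
    using blk_partner[of _ _ _ N n k s] blk_partner[of _ _ _ N n "opp k" s] by auto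
  ultimately show ?thesis unfolding gw_def by blast
qed

definition flipset :: "nat set \<Rightarrow> letter \<Rightarrow> letter" where
  "flipset F l = (if fst l \<in> F then (fst l, opp (fst (snd l)), snd (snd l)) else l)"

lemma flipset_simp[simp]: "flipset F (c,k,s) = (if c \<in> F then (c, opp k, s) else (c,k,s))"
  by (simp add: flipset_def)

lemma t1: "inj (\<lambda>(c,k). if c \<in> F then (c, opp k) else (c,k))"
    by (auto simp: inj_on_def split: if_splits)
lemma t2: "map key (map (flipset F) xs) = map (\<lambda>(c,k). if c \<in> F then (c, opp k) else (c,k)) (map key xs)"
    by (induct xs) (auto simp: key_def flipset_def)
lemma t3: "flipset F l = (c,k,s) \<Longrightarrow> \<exists>k0. l = (c,k0,s)" 
  by (cases l) (auto split: if_splits)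

lemma dmi: "distinct ys \<Longrightarrow> inj f \<Longrightarrow> distinct (map f ys)"
  by (simp add: distinct_map inj_on_def)

lemma gw_flip: "gw xs \<Longrightarrow> gw (map (flipset F) xs)"
proof -
  assume g: "gw xs"
  have "distinct (map key (map (flipset F) xs))"
  proof -
    have "distinct (map key xs)" using g unfolding gw_def by blast
    then show ?thesis unfolding t2 using dmi[OF _ t1] by blast
  qed
  moreover have "\<forall>c k s. (c,k,s) \<in> set (map (flipset F) xs) \<longrightarrow> (c, opp k, s) \<in> set (map (flipset F) xs)"
  proof (intro allI impI)
    fix c k s assume "(c,k,s) \<in> set (map (flipset F) xs)"
    then obtain l where l: "l \<in> set xs" "flipset F l = (c,k,s)" by (metis imageE list.set_map)
    obtain k0 where l0: "l = (c,k0,s)" using t3[OF l(2)] by blast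
    then have "(c, opp k0, s) \<in> set xs" using g l(1) unfolding gw_def by blast
    then have m: "flipset F (c, opp k0, s) \<in> set (map (flipset F) xs)" by (metis list.set_map imageI)
    show "(c, opp k, s) \<in> set (map (flipset F) xs)"
    proof (cases "c \<in> F")
      case True
      then have "k = opp k0" using l(2) l0 by simp
      then show ?thesis using m True by simp
    next
      case False
      then have "k = k0" using l(2) l0 by simp
      then show ?thesis using m False by simp
    qed
  qed
  ultimately show ?thesis unfolding gw_def by blast
qed

definition relab :: "(nat \<Rightarrow> nat) \<Rightarrow> letter \<Rightarrow> letter" where
  "relab g = (\<lambda>(c,k,s). (g c, k, s))"

lemma relab_simp[simp]: "relab g (c,k,s) = (g c, k, s)" by (simp add: relab_def)

lemma dmi2: "distinct ys \<Longrightarrow> inj_on f (set ys) \<Longrightarrow> distinct (map f ys)"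
  by (simp add: distinct_map)

lemma relab_key: "map key (map (relab g) xs) = map (\<lambda>(c,k). (g c, k)) (map key xs)"
  by (induct xs) (auto simp: key_def relab_def)

lemma gw_relab: "gw xs \<Longrightarrow> inj_on g (fst ` set xs) \<Longrightarrow> gw (map (relab g) xs)"
proof -
  assume g: "gw xs" and i: "inj_on g (fst ` set xs)"
  have ii: "inj_on (\<lambda>(c,k). (g c, k)) (set (map key xs))"
  proof (rule inj_onI)
    fix a b assume a: "a \<in> set (map key xs)" and b: "b \<in> set (map key xs)"
      and e: "(\<lambda>(c,k). (g c, k)) a = (\<lambda>(c,k). (g c, k)) b"
    have "fst a \<in> fst ` set xs" using a by (force simp: key_def)
    moreover have "fst b \<in> fst ` set xs" using b by (force simp: key_def)
    moreover have "g (fst a) = g (fst b)" "snd a = snd b" using e by (auto simp: split_def)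
    ultimately show "a = b" using i by (metis inj_onD prod_eqI)
  qed
  have "distinct (map key xs)" using g unfolding gw_def by blast
  then have "distinct (map key (map (relab g) xs))"
    unfolding relab_key using dmi2[OF _ ii] by blast
  moreover have "\<forall>c k s. (c,k,s) \<in> set (map (relab g) xs) \<longrightarrow> (c, opp k, s) \<in> set (map (relab g) xs)"
  proof (intro allI impI)
    fix c k s assume "(c,k,s) \<in> set (map (relab g) xs)"
    then obtain l where l: "l \<in> set xs" "relab g l = (c,k,s)" by (metis imageE list.set_map)
    obtain c0 where l0: "l = (c0,k,s)" "c = g c0" using l(2) by (cases l) auto
    then have "(c0, opp k, s) \<in> set xs" using g l(1) unfolding gw_def by blast
    then have "relab g (c0, opp k, s) \<in> set (map (relab g) xs)" by (metis list.set_map imageI)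
    then show "(c, opp k, s) \<in> set (map (relab g) xs)" using l0 by simp
  qed
  ultimately show ?thesis unfolding gw_def by blast
qed



lemma mset_rotate: "mset (rotate m xs) = mset xs"
proof -
  have "mset (rotate m xs) = mset (drop (m mod length xs) xs) + mset (take (m mod length xs) xs)"
    by (simp add: rotate_drop_take)
  also have "\<dots> = mset (take (m mod length xs) xs @ drop (m mod length xs) xs)"
    by (simp only: mset_append add.commute)
  also have "\<dots> = mset xs" by (simp only: append_take_drop_id)
  finally show ?thesis .
qed

lemma rot0: "gwf (C # rest) \<Longrightarrow> vn_equiv n (C # rest) (rotate m C # rest)"
proof -
  assume g: "gwf (C # rest)"
  have "gwf (rotate m C # rest)"
    using g unfolding gwf_gw by (rule gw_mset[rotated]) (simp add: mset_rotate)
  moreover have "giso (C # rest) (rotate m C # rest)"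
    unfolding giso_def by (intro disjI1 exI[of _ 0] exI[of _ m]) simp
  ultimately show ?thesis using g by (intro E_wstep) (simp add: welded_step_def)
qed

lemma rot1: "gwf (C1 # C # rest) \<Longrightarrow> vn_equiv n (C1 # C # rest) (C1 # rotate m C # rest)"
proof -
  assume g: "gwf (C1 # C # rest)"
  have "gwf (C1 # rotate m C # rest)"
    using g unfolding gwf_gw by (rule gw_mset[rotated]) (simp add: mset_rotate)
  moreover have "giso (C1 # C # rest) (C1 # rotate m C # rest)"
    unfolding giso_def by (intro disjI1 exI[of _ 1] exI[of _ m]) simp
  ultimately show ?thesis using g by (intro E_wstep) (simp add: welded_step_def)
qed

lemma adj_single: "adj [x @ a # b # y] a b"
proof -
  have "Suc (length x) mod length (x @ a # b # y) = Suc (length x)" by simp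
  then show ?thesis unfolding adj_def
    by (intro exI[of _ 0]) (auto intro!: exI[of _ "length x"] simp: nth_append)
qed

lemma swp_id: "a \<notin> set xs \<Longrightarrow> b \<notin> set xs \<Longrightarrow> map (swp a b) xs = xs"
  by (induct xs) (auto simp: swp_def)

lemma oc_swap:
  assumes g: "gw (x @ (c,OverE,s) # (d,OverE,t) # y)" and cd: "c \<noteq> d"
  shows "vn_equiv n [x @ (c,OverE,s) # (d,OverE,t) # y] [x @ (d,OverE,t) # (c,OverE,s) # y]"
proof -
  let ?a = "(c,OverE,s)" and ?b = "(d,OverE,t)"
  have di: "distinct (x @ ?a # ?b # y)" using gw_distinct[OF g] .
  have ab: "?a \<noteq> ?b" "?a \<notin> set x" "?b \<notin> set x" "?a \<notin> set y" "?b \<notin> set y" using di by auto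
  have "map (swp ?a ?b) (x @ ?a # ?b # y) = map (swp ?a ?b) x @ swp ?a ?b ?a # swp ?a ?b ?b # map (swp ?a ?b) y"
    by simp
  also have "\<dots> = x @ ?b # ?a # y"
    using swp_id[OF ab(2,3)] swp_id[OF ab(4,5)] ab(1) unfolding swp_def by presburger
  finally have m: "map (map (swp ?a ?b)) [x @ ?a # ?b # y] = [x @ ?b # ?a # y]" by simp
  have "oc [x @ ?a # ?b # y] [x @ ?b # ?a # y]"
    unfolding oc_def by (intro exI[of _ c] exI[of _ d] exI[of _ s] exI[of _ t] conjI cd adj_single m[symmetric])
  moreover have "gwf [x @ ?b # ?a # y]" using g unfolding gwf_gw
    by (rule gw_mset[rotated]) simp
  ultimately show ?thesis using g unfolding gwf_gw by (intro E_wstep) (simp add: welded_step_def gwf_gw)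
qed

lemma filter_keep: "\<forall>l\<in>set xs. fst l \<noteq> c \<Longrightarrow> filter (\<lambda>l. fst l \<notin> {c}) xs = xs"
  by (induct xs) auto

lemma gw_other: "gw (x @ (c,k,s) # (c,opp k,s) # y) \<Longrightarrow> l \<in> set x \<union> set y \<Longrightarrow> fst l \<noteq> c"
proof
  assume g: "gw (x @ (c,k,s) # (c,opp k,s) # y)" and l: "l \<in> set x \<union> set y" and e: "fst l = c"
  obtain k' t where lt: "l = (c,k',t)" using e by (cases l) auto
  have "l \<in> set (x @ (c,k,s) # (c,opp k,s) # y)" using l by auto
  then have "(k' = k \<and> t = s) \<or> (k' = opp k \<and> t = s)"
    using gw_fst[OF g, of c k s k' t] lt by auto
  then have "l = (c,k,s) \<or> l = (c,opp k,s)" using lt by auto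
  moreover have "distinct (x @ (c,k,s) # (c,opp k,s) # y)" using gw_distinct[OF g] .
  ultimately show False using l by auto
qed

lemma r1_gen:
  assumes g: "gw (x @ (c,k,s) # (c,opp k,s) # y)"
  shows "vn_equiv n [x @ (c,k,s) # (c,opp k,s) # y] [x @ y]"
proof -
  have fx: "filter (\<lambda>l. fst l \<notin> {c}) x = x" using gw_other[OF g] by (intro filter_keep) auto
  have fy: "filter (\<lambda>l. fst l \<notin> {c}) y = y" using gw_other[OF g] by (intro filter_keep) auto
  have dd: "del_ids {c} [x @ (c,k,s) # (c,opp k,s) # y] = [x @ y]"
    unfolding del_ids_def using fx fy by simp
  have "gw (filter (\<lambda>l. fst l \<notin> {c}) (x @ (c,k,s) # (c,opp k,s) # y))" by (rule gw_filter[OF g])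
  then have g2: "gw (x @ y)" using fx fy by simp
  have "adj [x @ (c,k,s) # (c,opp k,s) # y] (c,OverE,s) (c,UnderE,s) \<or>
        adj [x @ (c,k,s) # (c,opp k,s) # y] (c,UnderE,s) (c,OverE,s)"
    using adj_single[of x "(c,k,s)" "(c,opp k,s)" y] by (cases k) auto
  then have "r1_del [x @ (c,k,s) # (c,opp k,s) # y] [x @ y]"
    unfolding r1_del_def by (intro exI[of _ c] exI[of _ s]) (use dd in auto)
  then show ?thesis using g g2 by (intro E_wstep) (simp add: welded_step_def gwf_gw)
qed



lemma vn_split_step:
  assumes "even n" "length ids = n" "distinct ids" "set ids \<inter> gids ((u@v)#rest) = {}"
    "W1 = map (\<lambda>i. (ids!i, if even i then k0 else opp k0, s)) [0..<n]"
    "W2 = map (\<lambda>i. (ids!i, if even i then opp k0 else k0, s)) [0..<n]"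
    "gwf ((u@v)#rest)" "gwf ((u@W2)#(v@W1)#rest)"
  shows "vn_equiv n ((u@v)#rest) ((u@W2)#(v@W1)#rest)"
proof -
  have "vn_ins n ((u@v)#rest) ((u@W2)#(v@W1)#rest)"
    unfolding vn_ins_def Let_def
    by (intro exI[of _ ids] exI[of _ s] exI[of _ k0] conjI disjI2 assms(2-4))
       (use assms(1,5,6) in auto)
  then show ?thesis using assms(7,8) by (intro E_step) (simp add: vn_step_def)
qed

lemma vn_merge_step:
  assumes "even n" "length ids = n" "distinct ids" "set ids \<inter> gids (a#b#rest) = {}"
    "W1 = map (\<lambda>i. (ids!i, if even i then k0 else opp k0, s)) [0..<n]"
    "W2 = map (\<lambda>i. (ids!i, if even i then opp k0 else k0, s)) [0..<n]"
    "gwf (a#b#rest)" "gwf ((a @ W1 @ b @ W2)#rest)"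
  shows "vn_equiv n (a#b#rest) ((a @ W1 @ b @ W2)#rest)"
proof -
  have "vn_ins n (a#b#rest) ((a @ W1 @ b @ W2)#rest)"
    unfolding vn_ins_def Let_def
    by (intro exI[of _ ids] exI[of _ s] exI[of _ k0] conjI disjI1 assms(2-4))
       (use assms(1,5,6) in auto)
  then show ?thesis using assms(7,8) by (intro E_step) (simp add: vn_step_def)
qed

lemma blkA: "k' = opp k \<Longrightarrow> map (\<lambda>i. ([N..<N+n]!i, if even i then k else k', s)) [0..<n] = blk N n k s"
  unfolding blk_def by (rule map_cong) auto

lemma blkB: "k' = opp k \<Longrightarrow> map (\<lambda>i. ((c # [N..<N+m])!i, if even i then k else k', s)) [0..<Suc m] = (c,k,s) # blk N m k' s"
  unfolding blk_def map_upt_Suc by (auto intro!: map_cong)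

lemma blk_Suc_odd: "odd m \<Longrightarrow> blk N (Suc m) k s = blk N m k s @ [(N+m, opp k, s)]"
  unfolding blk_def by simp

lemma gw_cons_other: "gw ((c,k,s) # p @ (c,opp k,s) # q) \<Longrightarrow> c \<notin> fst ` (set p \<union> set q)"
proof
  assume g: "gw ((c,k,s) # p @ (c,opp k,s) # q)" and "c \<in> fst ` (set p \<union> set q)"
  then obtain l where l: "l \<in> set p \<union> set q" "fst l = c" by auto
  have g2: "gw ([] @ (c,k,s) # (c,opp k,s) # p @ q)"
    using g by (rule gw_mset[rotated]) simp
  show False using gw_other[OF g2, of l] l by auto
qed

lemma map_flip_id: assumes "\<And>l. l \<in> set xs \<Longrightarrow> fst l \<notin> F" shows "map (flipset F) xs = xs"
proof (rule map_idI)
  fix l assume "l \<in> set xs"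
  then have "fst l \<notin> F" by (rule assms)
  then show "flipset F l = l" by (simp add: flipset_def)
qed

lemma map_relab_id: assumes "\<And>l. l \<in> set xs \<Longrightarrow> g (fst l) = fst l" shows "map (relab g) xs = xs"
proof (rule map_idI)
  fix l assume "l \<in> set xs"
  then have "g (fst l) = fst l" by (rule assms)
  then show "relab g l = l" by (cases l) simp
qed

lemma inj_aux: "b \<notin> A \<Longrightarrow> inj_on (\<lambda>x. if x = a then b else x) (insert a A)"
  by (auto simp: inj_on_def)

lemma fresh_aux: "\<forall>x\<in>A. x < N \<Longrightarrow> c \<notin> A \<Longrightarrow> c < N \<Longrightarrow> set (c # [N..<N+m]) \<inter> insert (N+m) A = {}"
  by auto

lemma core_flip:
  assumes ev: "even n" and n0: "n > 0" and g: "gw ((c,OverE,s) # p @ (c,UnderE,s) # q)"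
  shows "vn_equiv n [(c,OverE,s) # p @ (c,UnderE,s) # q] [(c,UnderE,s) # p @ (c,OverE,s) # q]"
proof -
  define KO where "KO = OverE"
  define KU where "KU = UnderE"
  have OU: "opp KO = KU" "opp KU = KO" by (simp_all add: KO_def KU_def)
  define w0 where "w0 = (c,KO,s) # p @ (c,KU,s) # q"
  have g0: "gw w0" using g unfolding w0_def KO_def KU_def .
  have cpq: "c \<notin> fst ` (set p \<union> set q)"
    using gw_cons_other[of c KO s p q] g0 OU unfolding w0_def by simp
  obtain N where N: "\<forall>x \<in> fst ` set w0. x < N"
    using finite_nat_set_iff_bounded[of "fst ` set w0"] by blast
  obtain m where m: "n = Suc m" using n0 by (cases n) auto
  have om: "odd m" using ev m by simp
  have cN: "c < N" using N unfolding w0_def by simp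
  have pN: "\<forall>x \<in> fst ` (set p \<union> set q). x < N" using N unfolding w0_def by auto
  define w1 where "w1 = p @ (c,KU,s) # q @ [(c,KO,s)]"
  have e01: "vn_equiv n [w0] [w1]"
  proof -
    have "rotate 1 w0 = w1" unfolding w0_def w1_def by simp
    then show ?thesis using rot0[of w0 "[]" n 1] g0 by (simp add: gwf_gw)
  qed
  have g1: "gw w1" using g0 by (rule gw_mset[rotated]) (simp add: w0_def w1_def)
  define C1 where "C1 = p @ (c,KU,s) # blk N n KO s"
  define C2 where "C2 = q @ (c,KO,s) # blk N n KU s"
  have g2: "gw (C1 @ C2)"
  proof -
    have "gw (w1 @ blk N n KU s @ blk N n (opp KU) s)"
    proof (rule gw_append[OF g1 gw_blk])
      have "fst ` set w1 = fst ` set w0" unfolding w0_def w1_def by auto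
      moreover have "fst ` set (blk N n KU s @ blk N n (opp KU) s) = {N..<N+n}"
        by (simp only: set_append image_Un blk_fst) simp
      ultimately show "fst ` set w1 \<inter> fst ` set (blk N n KU s @ blk N n (opp KU) s) = {}"
        using N by (metis disjoint_iff atLeastLessThan_iff not_le)
    qed
    then show ?thesis by (rule gw_mset[rotated]) (simp add: w1_def C1_def C2_def OU)
  qed
  have e12: "vn_equiv n [w1] [C1, C2]"
  proof -
    have "vn_equiv n (((p @ [(c,KU,s)]) @ (q @ [(c,KO,s)])) # [])
        (((p @ [(c,KU,s)]) @ blk N n KO s) # ((q @ [(c,KO,s)]) @ blk N n KU s) # [])"
    proof (rule vn_split_step[OF ev, of "[N..<N+n]"])
      have "gids [(p @ [(c, KU, s)]) @ q @ [(c, KO, s)]] = fst ` set w0"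
        unfolding gids_def w0_def by auto
      then show "set [N..<N+n] \<inter> gids [(p @ [(c, KU, s)]) @ q @ [(c, KO, s)]] = {}"
        using N by (metis disjoint_iff atLeastLessThan_iff not_le set_upt)
      show "blk N n KU s = map (\<lambda>i. ([N..<N+n]!i, if even i then KU else opp KU, s)) [0..<n]"
        unfolding OU by (rule blkA[symmetric]) (simp add: OU)
      show "blk N n KO s = map (\<lambda>i. ([N..<N+n]!i, if even i then opp KU else KU, s)) [0..<n]"
        unfolding OU by (rule blkA[symmetric]) (simp add: OU)
      show "gwf [(p @ [(c, KU, s)]) @ q @ [(c, KO, s)]]" using g1 unfolding w1_def gwf_gw by simp
      show "gwf [(p @ [(c, KU, s)]) @ blk N n KO s, (q @ [(c, KO, s)]) @ blk N n KU s]"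
        using g2 unfolding C1_def C2_def gwf_gw by simp
    qed simp_all
    then show ?thesis unfolding w1_def C1_def C2_def by simp
  qed
  define C1' where "C1' = (N+m,KU,s) # p @ (c,KU,s) # blk N m KO s"
  define C2' where "C2' = (N+m,KO,s) # q @ (c,KO,s) # blk N m KU s"
  have bO: "blk N n KO s = blk N m KO s @ [(N+m, KU, s)]" using blk_Suc_odd[OF om, of N KO s] m OU by simp
  have bU: "blk N n KU s = blk N m KU s @ [(N+m, KO, s)]" using blk_Suc_odd[OF om, of N KU s] m OU by simp
  have e23: "vn_equiv n [C1, C2] [C1', C2']"
  proof -
    have r1: "rotate (length (p @ (c,KU,s) # blk N m KO s)) C1 = C1'"
      unfolding C1_def C1'_def bO using rotate_append[of "p @ (c,KU,s) # blk N m KO s" "[(N+m,KU,s)]"] by simp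
    have r2: "rotate (length (q @ (c,KO,s) # blk N m KU s)) C2 = C2'"
      unfolding C2_def C2'_def bU using rotate_append[of "q @ (c,KO,s) # blk N m KU s" "[(N+m,KO,s)]"] by simp
    have mC1: "mset C1' = mset C1" by (subst r1[symmetric]) (rule mset_rotate)
    have ga: "gwf [C1, C2]" using g2 by (simp add: gwf_gw)
    have gb: "gwf [C1', C2]" using g2 unfolding gwf_gw
      by (rule gw_mset[rotated]) (simp add: mC1)
    have x1: "vn_equiv n [C1, C2] [C1', C2]"
      using rot0[OF ga, of n "length (p @ (c,KU,s) # blk N m KO s)"] r1 by simp
    have x2: "vn_equiv n [C1', C2] [C1', C2']"
      using rot1[OF gb, of n "length (q @ (c,KO,s) # blk N m KU s)"] r2 by simp
    show ?thesis using E_trans[OF x1 x2] .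
  qed
  have g3: "gw (C1' @ C2')"
  proof -
    have "mset (C1 @ C2) = mset (C1' @ C2')" unfolding C1_def C2_def C1'_def C2'_def bO bU by simp
    then show ?thesis using g2 gw_mset by blast
  qed
  define w5 where "w5 = (c,KU,s) # p @ (c,KO,s) # q"
  define w4 where "w4 = (N+m,KU,s) # p @ (N+m,KO,s) # q"
  have fp: "map (flipset {c}) p = p" "map (flipset {c}) q = q"
  proof -
    have pm': "\<And>l. l \<in> set p \<union> set q \<Longrightarrow> fst l \<noteq> c" using cpq by (metis imageI)
    show "map (flipset {c}) p = p" "map (flipset {c}) q = q"
      by (intro map_flip_id; simp add: pm')+
  qed
  have g5: "gw w5"
  proof -
    have "map (flipset {c}) w0 = w5" unfolding w0_def w5_def using fp OU by simp
    then show ?thesis using gw_flip[OF g0, of "{c}"] by simp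
  qed
  define h where "h = (\<lambda>x. if x = N+m then c else x)"
  define h' where "h' = (\<lambda>x. if x = c then N+m else x)"
  have pm: "N+m \<notin> fst ` (set p \<union> set q)" using pN by force
  have hp: "map (relab h) p = p" "map (relab h) q = q"
  proof -
    have pm': "\<And>l. l \<in> set p \<union> set q \<Longrightarrow> fst l \<noteq> N+m" using pm by (metis imageI)
    show "map (relab h) p = p" "map (relab h) q = q"
      by (intro map_relab_id; simp add: h_def pm')+
  qed
  have hp': "map (relab h') p = p" "map (relab h') q = q"
  proof -
    have pm': "\<And>l. l \<in> set p \<union> set q \<Longrightarrow> fst l \<noteq> c" using cpq by (metis imageI)
    show "map (relab h') p = p" "map (relab h') q = q"
      by (intro map_relab_id; simp add: h'_def pm')+
  qed
  have w54: "map (relab h') w5 = w4" unfolding w5_def w4_def using hp' by (simp add: h'_def)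
  have w45: "map (relab h) w4 = w5" unfolding w5_def w4_def using hp by (simp add: h_def)
  have g4: "gw w4"
  proof -
    have fs: "fst ` set w5 = insert c (fst ` (set p \<union> set q))" unfolding w5_def by auto
    have "inj_on h' (insert c (fst ` (set p \<union> set q)))"
      using inj_aux[OF pm] unfolding h'_def .
    then have "inj_on h' (fst ` set w5)" unfolding fs .
    then show ?thesis using gw_relab[OF g5, of h'] w54 by simp
  qed
  have e34: "vn_equiv n [w4] [C1', C2']"
  proof -
    have "vn_equiv n ((((N+m,KU,s) # p) @ ((N+m,KO,s) # q)) # [])
        ((((N+m,KU,s) # p) @ ((c,KU,s) # blk N m KO s)) # (((N+m,KO,s) # q) @ ((c,KO,s) # blk N m KU s)) # [])"
    proof (rule vn_split_step[OF ev, of "c # [N..<N+m]"])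
      show "length (c # [N..<N+m]) = n" using m by simp
      show "distinct (c # [N..<N+m])" using cN by simp
      have gg: "gids [((N+m,KU,s) # p) @ (N+m,KO,s) # q] = insert (N+m) (fst ` (set p \<union> set q))"
        unfolding gids_def by auto
      show "set (c # [N..<N+m]) \<inter> gids [((N+m,KU,s) # p) @ (N+m,KO,s) # q] = {}"
        unfolding gg by (rule fresh_aux[OF pN cpq cN])
      show "(c,KO,s) # blk N m KU s = map (\<lambda>i. ((c # [N..<N+m])!i, if even i then KO else opp KO, s)) [0..<n]"
        unfolding m OU by (rule blkB[symmetric]) (simp add: OU)
      show "(c,KU,s) # blk N m KO s = map (\<lambda>i. ((c # [N..<N+m])!i, if even i then opp KO else KO, s)) [0..<n]"
        unfolding m OU by (rule blkB[symmetric]) (simp add: OU)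
      show "gwf [((N+m,KU,s) # p) @ (N+m,KO,s) # q]" using g4 unfolding w4_def gwf_gw by simp
      show "gwf [((N+m,KU,s) # p) @ (c,KU,s) # blk N m KO s, ((N+m,KO,s) # q) @ (c,KO,s) # blk N m KU s]"
        using g3 unfolding C1'_def C2'_def gwf_gw by simp
    qed
    then show ?thesis unfolding w4_def C1'_def C2'_def by simp
  qed
  have e45: "vn_equiv n [w4] [w5]"
  proof -
    have "inj_on h (gids [w4])"
      using pm cpq unfolding w4_def h_def inj_on_def gids_def by auto
    moreover have "[w5] = map (map (\<lambda>(c,k,s). (h c, k, s))) [w4]"
      using w45 by (simp add: relab_def)
    ultimately have "giso [w4] [w5]" unfolding giso_def by (intro disjI2 exI[of _ h] conjI)
    then show ?thesis using g4 g5 by (intro E_wstep) (simp add: welded_step_def gwf_gw)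
  qed
  have "vn_equiv n [w0] [w5]"
    using E_trans[OF e01 E_trans[OF e12 E_trans[OF e23 E_trans[OF E_sym[OF e34] e45]]]] .
  then show ?thesis unfolding w0_def w5_def KO_def KU_def .
qed



lemma flip1:
  assumes ev: "even n" and n0: "n > 0" and g: "gw w"
  shows "vn_equiv n [w] [map (flipset {d}) w]"
proof (cases "d \<in> fst ` set w")
  case False
  then have "map (flipset {d}) w = w" by (intro map_flip_id) (metis imageI singletonD)
  then show ?thesis by (simp add: E_refl)
next
  case True
  then obtain l where l: "l \<in> set w" "fst l = d" by blast
  obtain k s where lk: "l = (d,k,s)" using l(2) by (cases l) auto
  have dO: "(d,OverE,s) \<in> set w"
  proof (cases k)
    case OverE then show ?thesis using l lk by simp
  next
    case UnderE
    have "(d,k,s) \<in> set w" using l lk by simp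
    then have "(d, opp k, s) \<in> set w" using g unfolding gw_def by blast
    then show ?thesis using UnderE by simp
  qed
  then obtain xs ys where w: "w = xs @ (d,OverE,s) # ys" using split_list[OF dO] by blast
  have "(d, opp OverE, s) \<in> set w" using g dO unfolding gw_def by blast
  then have "(d,UnderE,s) \<in> set w" by simp
  then have "(d,UnderE,s) \<in> set (ys @ xs)" using w by auto
  then obtain p q where pq: "ys @ xs = p @ (d,UnderE,s) # q" using split_list by metis
  define w' where "w' = (d,OverE,s) # p @ (d,UnderE,s) # q"
  have rw: "rotate (length xs) w = w'" unfolding w w'_def using rotate_append[of xs "(d,OverE,s) # ys"] pq by simp
  have g': "gw w'" using g by (rule gw_mset[rotated]) (simp add: rw[symmetric] mset_rotate)
  have e1: "vn_equiv n [w] [w']" using rot0[of w "[]" n "length xs"] g rw by (simp add: gwf_gw)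
  have e2: "vn_equiv n [w'] [(d,UnderE,s) # p @ (d,OverE,s) # q]"
    unfolding w'_def by (rule core_flip[OF ev n0]) (use g' w'_def in simp)
  have cpq: "d \<notin> fst ` (set p \<union> set q)" using gw_cons_other[of d OverE s p q] g' unfolding w'_def by simp
  have "map (flipset {d}) p = p" "map (flipset {d}) q = q"
  proof -
    have pm': "\<And>l. l \<in> set p \<union> set q \<Longrightarrow> fst l \<noteq> d" using cpq by (metis imageI)
    show "map (flipset {d}) p = p" "map (flipset {d}) q = q"
      by (intro map_flip_id; simp add: pm')+
  qed
  then have mf: "map (flipset {d}) w' = (d,UnderE,s) # p @ (d,OverE,s) # q" unfolding w'_def by simp
  have "rotate (length xs) (map (flipset {d}) w) = map (flipset {d}) w'"
    using rw by (simp add: rotate_map)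
  then have e3: "vn_equiv n [map (flipset {d}) w] [(d,UnderE,s) # p @ (d,OverE,s) # q]"
    using rot0[of "map (flipset {d}) w" "[]" n "length xs"] gw_flip[OF g, of "{d}"] mf by (simp add: gwf_gw)
  show ?thesis using E_trans[OF E_trans[OF e1 e2] E_sym[OF e3]] .
qed

lemma flipset_insert: "d \<notin> F \<Longrightarrow> flipset (insert d F) l = flipset {d} (flipset F l)"
proof -
  assume d: "d \<notin> F"
  obtain c k s where l: "l = (c,k,s)" by (cases l)
  show ?thesis unfolding l using d by (cases "c = d") simp_all
qed

lemma flipF:
  assumes ev: "even n" and n0: "n > 0" and fin: "finite F"
  shows "gw w \<Longrightarrow> vn_equiv n [w] [map (flipset F) w]"
  using fin
proof (induction F rule: finite_induct)
  case empty
  have "map (flipset {}) w = w" by (intro map_flip_id) simp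
  then show ?case by (simp add: E_refl)
next
  case (insert d F)
  have eq: "map (flipset (insert d F)) w = map (flipset {d}) (map (flipset F) w)"
  proof -
    have "flipset (insert d F) = flipset {d} \<circ> flipset F"
      by (rule ext) (simp only: comp_def flipset_insert[OF insert(2)])
    then show ?thesis by (simp only: map_map)
  qed
  have e1: "vn_equiv n [w] [map (flipset F) w]" by (rule insert(3)[OF insert(4)])
  have e2: "vn_equiv n [map (flipset F) w] [map (flipset {d}) (map (flipset F) w)]"
    by (rule flip1[OF ev n0 gw_flip[OF insert(4)]])
  show ?case unfolding eq by (rule E_trans[OF e1 e2])
qed

lemma decomp:
  "\<not> distinct (map fst w) \<Longrightarrow> \<exists>x e1 z e2 y. w = x @ e1 # z @ e2 # y \<and> fst e1 = fst e2 \<and> distinct (map fst (e1 # z))"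
proof (induction w rule: rev_induct)
  case Nil then show ?case by simp
next
  case (snoc a w)
  show ?case
  proof (cases "distinct (map fst w)")
    case False
    then obtain x e1 z e2 y where h: "w = x @ e1 # z @ e2 # y" "fst e1 = fst e2" "distinct (map fst (e1 # z))"
      using snoc.IH by blast
    then have "w @ [a] = x @ e1 # z @ e2 # (y @ [a])" by simp
    then show ?thesis using h(2,3) by blast
  next
    case True
    then have "fst a \<in> fst ` set w" using snoc.prems by simp
    then obtain e1 where e1: "e1 \<in> set w" "fst e1 = fst a" by (metis imageE)
    then obtain x z where w: "w = x @ e1 # z" using split_list by metis
    have "distinct (map fst (e1 # z))" using True w by simp
    moreover have "w @ [a] = x @ e1 # z @ a # []" using w by simp
    ultimately show ?thesis using e1(2) by blast
  qed
qed



lemma slide: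
  assumes eO: "fst (snd e) = OverE"
  shows "gw (x @ e # z @ y) \<Longrightarrow> (\<forall>l\<in>set z. fst (snd l) = OverE \<and> fst l \<noteq> fst e) \<Longrightarrow>
    vn_equiv n [x @ e # z @ y] [x @ z @ e # y]"
proof (induction z arbitrary: x)
  case Nil then show ?case by (simp add: E_refl)
next
  case (Cons l z)
  obtain c s where e: "e = (c,OverE,s)" using eO by (cases e) auto
  have lz: "fst (snd l) = OverE" "fst l \<noteq> fst e" using Cons.prems(2) by auto
  obtain d t where l: "l = (d,OverE,t)" using lz(1) by (cases l) auto
  have cd: "c \<noteq> d" using lz(2) e l by simp
  have e1: "vn_equiv n [x @ e # l # z @ y] [x @ l # e # z @ y]"
    unfolding e l by (rule oc_swap[OF _ cd]) (use Cons.prems(1) e l in simp)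
  have g2: "gw ((x @ [l]) @ e # z @ y)" using Cons.prems(1) by (rule gw_mset[rotated]) simp
  have e2': "vn_equiv n [(x @ [l]) @ e # z @ y] [(x @ [l]) @ z @ e # y]"
    by (rule Cons.IH[OF g2]) (use Cons.prems(2) in simp)
  have e2: "vn_equiv n [x @ l # e # z @ y] [x @ (l # z) @ e # y]" using e2' by simp
  show ?case using E_trans[OF e1 e2] by simp
qed

lemma r1_gw: "gw (x @ (c,k,s) # (c,opp k,s) # y) \<Longrightarrow> gw (x @ y)"
proof -
  assume g: "gw (x @ (c,k,s) # (c,opp k,s) # y)"
  have fx: "filter (\<lambda>l. fst l \<notin> {c}) x = x" using gw_other[OF g] by (intro filter_keep) auto
  have fy: "filter (\<lambda>l. fst l \<notin> {c}) y = y" using gw_other[OF g] by (intro filter_keep) auto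
  have "gw (filter (\<lambda>l. fst l \<notin> {c}) (x @ (c,k,s) # (c,opp k,s) # y))" by (rule gw_filter[OF g])
  then show "gw (x @ y)" using fx fy by simp
qed

lemma single:
  assumes ev: "even n" and n0: "n > 0"
  shows "gw w \<Longrightarrow> vn_equiv n [w] unknot"
proof (induction "length w" arbitrary: w rule: less_induct)
  case less
  show ?case
  proof (cases "w = []")
    case True then show ?thesis by (simp add: unknot_def E_refl)
  next
    case False
    then obtain l0 where l0: "l0 \<in> set w" by (cases w) auto
    obtain c0 k0 s0 where l0e: "l0 = (c0,k0,s0)" by (cases l0)
    have l0': "(c0, opp k0, s0) \<in> set w" using less.prems l0 l0e unfolding gw_def by blast
    have nd: "\<not> distinct (map fst w)"
    proof
      assume "distinct (map fst w)"
      then have "inj_on fst (set w)" by (simp add: distinct_map)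
      then have "(c0,k0,s0) = (c0, opp k0, s0)" using l0 l0e l0' by (metis fst_conv inj_onD)
      then show False by simp
    qed
    obtain x e1 z e2 y where dec: "w = x @ e1 # z @ e2 # y" "fst e1 = fst e2" "distinct (map fst (e1 # z))"
      using decomp[OF nd] by blast
    obtain c k s where e1: "e1 = (c,k,s)" by (cases e1)
    obtain k2 s2 where e2': "e2 = (c,k2,s2)" using dec(2) e1 by (cases e2) auto
    have dw: "distinct w" using gw_distinct[OF less.prems] .
    have "e1 \<noteq> e2" using dw dec(1) by auto
    moreover have "(k2 = k \<and> s2 = s) \<or> (k2 = opp k \<and> s2 = s)"
      using gw_fst[OF less.prems, of c k s k2 s2] dec(1) e1 e2' by simp
    ultimately have e2: "e2 = (c, opp k, s)" using e1 e2' by auto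
    define F where "F = fst ` {l \<in> set z. fst (snd l) = UnderE}"
    have finF: "finite F" unfolding F_def by simp
    have cz: "c \<notin> fst ` set z" using dec(3) e1 by simp
    have cF: "c \<notin> F" using cz unfolding F_def by blast
    have zO: "\<forall>l'\<in>set (map (flipset F) z). fst (snd l') = OverE \<and> fst l' \<noteq> c"
    proof
      fix l' assume "l' \<in> set (map (flipset F) z)"
      then obtain l where l: "l \<in> set z" "l' = flipset F l" by auto
      obtain d kd td where ld: "l = (d,kd,td)" by (cases l)
      have dc: "d \<noteq> c" using cz l(1) ld by (metis fst_conv imageI)
      show "fst (snd l') = OverE \<and> fst l' \<noteq> c"
      proof (cases kd)
        case UnderE
        then have "d \<in> F" unfolding F_def using l(1) ld by force
        then show ?thesis using l(2) ld UnderE dc by simp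
      next
        case OverE
        have "d \<notin> F"
        proof
          assume "d \<in> F"
          then obtain l2 where l2: "l2 \<in> set z" "fst (snd l2) = UnderE" "fst l2 = d" unfolding F_def by auto
          have "inj_on fst (set z)" using dec(3) by (simp add: distinct_map)
          then have "l2 = l" using l2 l(1) ld by (metis fst_conv inj_onD)
          then show False using l2(2) ld OverE by simp
        qed
        then show ?thesis using l(2) ld OverE dc by simp
      qed
    qed
    let ?f = "flipset F"
    have fe1: "?f e1 = e1" "?f e2 = e2" using cF e1 e2 by simp_all
    have w': "map ?f w = map ?f x @ e1 # map ?f z @ e2 # map ?f y" using dec(1) fe1 by simp
    have ew: "vn_equiv n [w] [map ?f w]" by (rule flipF[OF ev n0 finF less.prems])
    have gw': "gw (map ?f x @ e1 # map ?f z @ e2 # map ?f y)" using gw_flip[OF less.prems, of F] w' by simp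
    have fin: "vn_equiv n [map ?f x @ e1 # map ?f z @ e2 # map ?f y] [map ?f x @ map ?f z @ map ?f y]
             \<and> gw (map ?f x @ map ?f z @ map ?f y)"
    proof (cases k)
      case OverE
      have s1: "vn_equiv n [map ?f x @ e1 # map ?f z @ (e2 # map ?f y)] [map ?f x @ map ?f z @ e1 # e2 # map ?f y]"
        by (rule slide) (use OverE e1 gw' zO in simp_all)
      have "mset (map ?f x @ e1 # map ?f z @ e2 # map ?f y) = mset ((map ?f x @ map ?f z) @ (c,k,s) # (c, opp k, s) # map ?f y)"
        using e1 e2 by simp
      then have g3: "gw ((map ?f x @ map ?f z) @ (c,k,s) # (c, opp k, s) # map ?f y)"
        using gw' by (rule gw_mset)
      have s2: "vn_equiv n [(map ?f x @ map ?f z) @ (c,k,s) # (c, opp k, s) # map ?f y] [(map ?f x @ map ?f z) @ map ?f y]"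
        by (rule r1_gen[OF g3])
      have s2': "vn_equiv n [map ?f x @ map ?f z @ e1 # e2 # map ?f y] [map ?f x @ map ?f z @ map ?f y]"
        using s2 e1 e2 by simp
      have gg: "gw (map ?f x @ map ?f z @ map ?f y)" using r1_gw[OF g3] by simp
      show ?thesis using E_trans[OF s1 s2'] gg by blast
    next
      case UnderE
      have "mset (map ?f x @ e1 # map ?f z @ e2 # map ?f y) = mset ((map ?f x @ [e1]) @ e2 # map ?f z @ map ?f y)"
        by simp
      then have g4: "gw ((map ?f x @ [e1]) @ e2 # map ?f z @ map ?f y)"
        using gw' by (rule gw_mset)
      have s1: "vn_equiv n [(map ?f x @ [e1]) @ e2 # map ?f z @ map ?f y] [(map ?f x @ [e1]) @ map ?f z @ e2 # map ?f y]"
        by (rule slide) (use UnderE e2 g4 zO in simp_all)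
      have "mset (map ?f x @ e1 # map ?f z @ e2 # map ?f y) = mset (map ?f x @ (c,k,s) # (c, opp k, s) # map ?f z @ map ?f y)"
        using e1 e2 by simp
      then have g3: "gw (map ?f x @ (c,k,s) # (c, opp k, s) # map ?f z @ map ?f y)"
        using gw' by (rule gw_mset)
      have s2: "vn_equiv n [map ?f x @ (c,k,s) # (c, opp k, s) # map ?f z @ map ?f y] [map ?f x @ map ?f z @ map ?f y]"
        by (rule r1_gen[OF g3])
      have s1': "vn_equiv n [map ?f x @ e1 # map ?f z @ e2 # map ?f y] [map ?f x @ e1 # e2 # map ?f z @ map ?f y]"
        using E_sym[OF s1] by simp
      have s2': "vn_equiv n [map ?f x @ e1 # e2 # map ?f z @ map ?f y] [map ?f x @ map ?f z @ map ?f y]"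
        using s2 e1 e2 by simp
      have gg: "gw (map ?f x @ map ?f z @ map ?f y)" using r1_gw[OF g3] .
      show ?thesis using E_trans[OF s1' s2'] gg by blast
    qed
    have "length (map ?f x @ map ?f z @ map ?f y) < length w" using dec(1) by simp
    then have "vn_equiv n [map ?f x @ map ?f z @ map ?f y] unknot" by (rule less.hyps[OF _ conjunct2[OF fin]])
    then have "vn_equiv n [map ?f x @ e1 # map ?f z @ e2 # map ?f y] unknot" by (rule E_trans[OF conjunct1[OF fin]])
    then show ?thesis using E_trans[OF ew[unfolded w']] by blast
  qed
qed

lemma fresh_aux2: "\<forall>x\<in>A. x < N \<Longrightarrow> set [N..<N+n] \<inter> A = {}"
  by auto

lemma multi:
  assumes ev: "even n" and n0: "n > 0"
  shows "gwf D \<Longrightarrow> D \<noteq> [] \<Longrightarrow> vn_equiv n D unknot"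
proof (induction "length D" arbitrary: D rule: less_induct)
  case less
  show ?case
  proof (cases D)
    case Nil then show ?thesis using less.prems by simp
  next
    case (Cons a D1)
    show ?thesis
    proof (cases D1)
      case Nil
      have "gw a" using less.prems(1) Cons Nil by (simp add: gwf_gw)
      then show ?thesis using single[OF ev n0] Cons Nil by simp
    next
      case (Cons b rest)
      have D: "D = a # b # rest" using Cons \<open>D = a # D1\<close> by simp
      obtain N where N: "\<forall>x \<in> gids D. x < N"
        using finite_nat_set_iff_bounded[of "gids D"] unfolding gids_def by blast
      define W1 where "W1 = blk N n OverE True"
      define W2 where "W2 = blk N n (opp OverE) True"
      define D' where "D' = (a @ W1 @ b @ W2) # rest"
      have gD: "gw (concat D)" using less.prems(1) by (simp add: gwf_gw)
      have "gw (concat D @ W1 @ W2)" unfolding W1_def W2_def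
      proof (rule gw_append[OF gD gw_blk])
        have "fst ` set (blk N n OverE True @ blk N n (opp OverE) True) = {N..<N+n}"
          by (simp only: set_append image_Un blk_fst) simp
        moreover have "fst ` set (concat D) = gids D" by (simp add: gids_def)
        ultimately show "fst ` set (concat D) \<inter> fst ` set (blk N n OverE True @ blk N n (opp OverE) True) = {}"
          using fresh_aux2[OF N, of n] by auto
      qed
      then have gD': "gwf D'" unfolding gwf_gw D'_def
        by (rule gw_mset[rotated]) (simp add: D)
      have e: "vn_equiv n (a # b # rest) ((a @ W1 @ b @ W2) # rest)"
      proof (rule vn_merge_step[OF ev, of "[N..<N+n]" _ _ _ _ OverE True])
        show "set [N..<N+n] \<inter> gids (a # b # rest) = {}"
          using fresh_aux2[OF N[unfolded D]] by (simp add: Int_commute)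
        show "W1 = map (\<lambda>i. ([N..<N+n]!i, if even i then OverE else opp OverE, True)) [0..<n]"
          unfolding W1_def by (rule blkA[symmetric]) simp
        show "W2 = map (\<lambda>i. ([N..<N+n]!i, if even i then opp OverE else OverE, True)) [0..<n]"
          unfolding W2_def by (rule blkA[symmetric]) simp
        show "gwf (a # b # rest)" using less.prems(1) D by simp
        show "gwf ((a @ W1 @ b @ W2) # rest)" using gD' D'_def by simp
      qed simp_all
      have "length D' < length D" unfolding D'_def D by simp
      then have "vn_equiv n D' unknot" using less.hyps gD' unfolding D'_def by blast
      then show ?thesis using E_trans[OF e] D D'_def by simp
    qed
  qed
qed

theorem theorem1p1:
  fixes n :: nat and D :: gauss
  assumes "n > 0" and "even n" and "gwf D" and "D \<noteq> []"
  shows "vn_equiv n D unknot"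
  using multi[OF assms(2,1) assms(3,4)] .

end
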